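(* Let $D$ be a nonempty convex subset of a topological vector space $X$ and let $K$ be a nonempty set. Let $R_1\subseteq D\times K$ and $R_2\subseteq D\times D$ be relations satisfying: (i) for each $y\in K$, the set $\{x\in D: (x,y)\in R_1\}$ is compactly closed; (ii) $R_2$ is KKM on $D\times D$; (iii) for each $y\in K$ there exists $z\in D$ such that for all $x\in D$, $(z,x)\in R_2$ implies $(x,y)\in R_1$; (iv) there exist a nonempty compact subset $M$ of $D$ and a finite subset $L$ of $K$ such that for each $x\in D\setminus M$ there exists $y\in L$ with $(x,y)\notin R_1$. Then there exists $\bar x\in M$ such that $(\bar x,y)\in R_1$ for all $y\in K$.
   Context: A subset $A$ of a topological space $X$ is compactly closed if for every compact subset $M$ of $X$ the set $A\cap M$ is closed in $M$. A relation $R'\subseteq D\times D$ is KKM on $D\times D$ if for every finite subset $\{x_1,\dots,x_n\}\subset D$ and every $x\in\operatorname{co}\{x_1,\dots,x_n\}$ there exists $j\in\{1,\dots,n\}$ with $(x_j,x)\in R'$. Here $\operatorname{co}$ denotes the convex hull. *)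

theory Defs
  imports "HOL-Analysis.Analysis"
begin

definition tvs :: "'a::{real_vector,topological_space} itself \<Rightarrow> bool" where
  "tvs _ \<longleftrightarrow>
     continuous_on UNIV (\<lambda>p::'a \<times> 'a. fst p + snd p) \<and>
     continuous_on UNIV (\<lambda>p::real \<times> 'a. fst p *\<^sub>R snd p)"

definition compactly_closed :: "'a::topological_space set \<Rightarrow> bool" where
  "compactly_closed A \<longleftrightarrow>
     (\<forall>M. compact M \<longrightarrow> closedin (top_of_set M) (A \<inter> M))"

definition KKM_rel :: "'a::real_vector set \<Rightarrow> ('a \<times> 'a) set \<Rightarrow> bool" where
  "KKM_rel D R \<longleftrightarrow>
     (\<forall>N. finite N \<and> N \<subseteq> D \<longrightarrow>
        (\<forall>x \<in> convex hull N. \<exists>z \<in> N. (z, x) \<in> R))"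

end

theory Submission
  imports Defs
begin


definition cube :: "nat \<Rightarrow> (nat \<Rightarrow> real) set" where
  "cube n = {x. (\<forall>i<n. 0 \<le> x i \<and> x i \<le> 1) \<and> (\<forall>i\<ge>n. x i = 0)}"

lemma cube_PiE: "cube n = PiE UNIV (\<lambda>i. if i < n then {0..1} else {0})"
  unfolding cube_def by (auto simp: PiE_iff) (metis atLeastAtMost_iff singletonD leD)+

lemma compact_cube: "compact (cube n)"
proof -
  have "compactin (product_topology (\<lambda>i. euclidean) UNIV) (PiE UNIV (\<lambda>i. if i < n then {0..1::real} else {0}))"
    by (subst compactin_PiE) auto
  then show ?thesis by (simp add: cube_PiE euclidean_product_topology)
qed

lemma closed_cube: "closed (cube n)"
  by (simp add: compact_cube compact_imp_closed)

lemma tendsto_fun_iff: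
  fixes f :: "'x \<Rightarrow> nat \<Rightarrow> real"
  shows "(f \<longlongrightarrow> l) F \<longleftrightarrow> (\<forall>i. ((\<lambda>c. f c i) \<longlongrightarrow> l i) F)"
  using limitin_componentwise[of "\<lambda>i. euclidean" UNIV f l F]
  by (simp add: euclidean_product_topology)

lemma PM:
  fixes P Q :: "nat \<Rightarrow> (nat \<Rightarrow> real) set"
  assumes clP: "\<And>i. i<n \<Longrightarrow> closed (P i)" and clQ: "\<And>i. i<n \<Longrightarrow> closed (Q i)"
   and P0: "\<And>i x. i<n \<Longrightarrow> x \<in> cube n \<Longrightarrow> x i = 0 \<Longrightarrow> x \<in> P i"
   and Q1: "\<And>i x. i<n \<Longrightarrow> x \<in> cube n \<Longrightarrow> x i = 1 \<Longrightarrow> x \<in> Q i"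
   and PQ: "\<And>i x. i<n \<Longrightarrow> x \<in> cube n \<Longrightarrow> x \<in> P i \<or> x \<in> Q i"
  shows "\<exists>x\<in>cube n. \<forall>i<n. x \<in> P i \<and> x \<in> Q i"
proof -
  define g where "g p y = (\<lambda>j. if j<n then real (y j) / real p else 0)" for p::nat and y :: "nat \<Rightarrow> nat"
  have gc: "g p y \<in> cube n" if "p>0" "\<forall>j<n. y j \<le> p" for p y
    using that by (auto simp: g_def cube_def divide_le_eq_1)
  have step: "\<exists>c\<in>cube n. \<forall>i<n. (\<exists>a\<in>P i. \<forall>j. \<bar>a j - c j\<bar> \<le> 1/real p) \<and> (\<exists>b\<in>Q i. \<forall>j. \<bar>b j - c j\<bar> \<le> 1/real p)"
    if p0: "p > 0" for p
  proof -
    define label where "label y i = (if y i = 0 then 0 else if y i = p then 1 else if g p y \<in> P i then 0 else (1::nat))" for y i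
    have L0: "g p y \<in> P i" if "\<forall>j<n. y j \<le> p" "i<n" "label y i = 0" for y i
    proof (cases "y i = 0")
      case True
      then show ?thesis using P0[OF \<open>i<n\<close> gc[OF p0 that(1)]] that by (simp add: g_def)
    next
      case False
      then show ?thesis using that by (auto simp: label_def split: if_splits)
    qed
    have L1: "g p y \<in> Q i" if "\<forall>j<n. y j \<le> p" "i<n" "label y i = 1" for y i
    proof (cases "y i = p")
      case True
      then show ?thesis using Q1[OF \<open>i<n\<close> gc[OF p0 that(1)]] that p0 by (simp add: g_def)
    next
      case False
      then have "g p y \<notin> P i" using that by (auto simp: label_def split: if_splits)
      then show ?thesis using PQ[OF \<open>i<n\<close> gc[OF p0 that(1)]] by blast
    qed
    obtain q where q1: "\<forall>i<n. q i < p" and q2: "\<forall>i<n. \<exists>r s. (\<forall>j<n. q j \<le> r j \<and> r j \<le> q j + 1) \<and> (\<forall>j<n. q j \<le> s j \<and> s j \<le> q j + 1) \<and> label r i \<noteq> label s i"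
      by (rule kuhn_lemma[OF p0, of n label]) (use p0 in \<open>auto simp: label_def\<close>)
    have gq: "g p q \<in> cube n" using gc[OF p0] q1 by (simp add: less_imp_le)
    show ?thesis
    proof (intro bexI[OF _ gq] allI impI conjI)
      fix i assume i: "i<n"
      obtain r s where r: "\<forall>j<n. q j \<le> r j \<and> r j \<le> q j + 1" and s: "\<forall>j<n. q j \<le> s j \<and> s j \<le> q j + 1"
        and rs: "label r i \<noteq> label s i"
        using q2 i by blast
      have rp: "\<forall>j<n. r j \<le> p" using r q1 by (metis Suc_eq_plus1 Suc_le_eq le_trans)
      have sp: "\<forall>j<n. s j \<le> p" using s q1 by (metis Suc_eq_plus1 Suc_le_eq le_trans)
      have close: "\<bar>g p y j - g p q j\<bar> \<le> 1/real p" if "\<forall>j<n. q j \<le> y j \<and> y j \<le> q j + 1" for y j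
      proof (cases "j<n")
        case True
        then have "\<bar>real (y j) - real (q j)\<bar> \<le> 1" using that by auto
        then have "\<bar>real (y j) - real (q j)\<bar> / real p \<le> 1 / real p"
          using p0 by (simp add: divide_right_mono)
        then show ?thesis using True by (simp add: g_def diff_divide_distrib[symmetric])
      qed (simp add: g_def)
      have lr: "label r i = 0 \<or> label r i = 1" and ls: "label s i = 0 \<or> label s i = 1"
        by (auto simp: label_def)
      have "(g p r \<in> P i \<and> g p s \<in> Q i) \<or> (g p s \<in> P i \<and> g p r \<in> Q i)"
        using lr ls rs L0[OF rp i] L1[OF rp i] L0[OF sp i] L1[OF sp i] by auto
      then show "\<exists>a\<in>P i. \<forall>j. \<bar>a j - g p q j\<bar> \<le> 1/real p" and "\<exists>b\<in>Q i. \<forall>j. \<bar>b j - g p q j\<bar> \<le> 1/real p"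
        using close[OF r] close[OF s] by blast+
    qed
  qed
  have "\<forall>k. \<exists>c. c \<in> cube n \<and> (\<forall>i<n. (\<exists>a\<in>P i. \<forall>j. \<bar>a j - c j\<bar> \<le> 1/real (Suc k)) \<and> (\<exists>b\<in>Q i. \<forall>j. \<bar>b j - c j\<bar> \<le> 1/real (Suc k)))"
    using step by (metis zero_less_Suc)
  then obtain c where c: "\<And>k. c k \<in> cube n"
    and cab: "\<And>k i. i<n \<Longrightarrow> (\<exists>a\<in>P i. \<forall>j. \<bar>a j - c k j\<bar> \<le> 1/real (Suc k)) \<and> (\<exists>b\<in>Q i. \<forall>j. \<bar>b j - c k j\<bar> \<le> 1/real (Suc k))"
    by metis
  define A where "A k i = (SOME a. a \<in> P i \<and> (\<forall>j. \<bar>a j - c k j\<bar> \<le> 1/real (Suc k)))" for k i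
  have A: "A k i \<in> P i \<and> (\<forall>j. \<bar>A k i j - c k j\<bar> \<le> 1/real (Suc k))" if "i<n" for k i
  proof -
    have "\<exists>a. a \<in> P i \<and> (\<forall>j. \<bar>a j - c k j\<bar> \<le> 1/real (Suc k))" using cab[OF that] by blast
    from someI_ex[OF this] show ?thesis unfolding A_def .
  qed
  define B where "B k i = (SOME a. a \<in> Q i \<and> (\<forall>j. \<bar>a j - c k j\<bar> \<le> 1/real (Suc k)))" for k i
  have B: "B k i \<in> Q i \<and> (\<forall>j. \<bar>B k i j - c k j\<bar> \<le> 1/real (Suc k))" if "i<n" for k i
  proof -
    have "\<exists>a. a \<in> Q i \<and> (\<forall>j. \<bar>a j - c k j\<bar> \<le> 1/real (Suc k))" using cab[OF that] by blast
    from someI_ex[OF this] show ?thesis unfolding B_def .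
  qed
  obtain l \<sigma> where l: "l \<in> cube n" and \<sigma>: "strict_mono \<sigma>" and lim: "(c \<circ> \<sigma>) \<longlonglongrightarrow> l"
    using compact_imp_seq_compact[OF compact_cube] c unfolding seq_compact_def by metis
  have inv0: "(\<lambda>k. 1 / real (Suc (\<sigma> k))) \<longlonglongrightarrow> 0"
    using LIMSEQ_subseq_LIMSEQ[OF LIMSEQ_inverse_real_of_nat \<sigma>] by (simp add: o_def inverse_eq_divide)
  have limj: "(\<lambda>k. c (\<sigma> k) j) \<longlonglongrightarrow> l j" for j
    using lim unfolding tendsto_fun_iff by (simp add: o_def)
  have conv: "(\<lambda>k. X k j) \<longlonglongrightarrow> l j"
    if "\<And>k. \<bar>X k j - c (\<sigma> k) j\<bar> \<le> 1/real (Suc (\<sigma> k))" for X :: "nat \<Rightarrow> nat \<Rightarrow> real" and j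
  proof -
    have "(\<lambda>k. X k j - c (\<sigma> k) j) \<longlonglongrightarrow> 0"
      by (rule Lim_null_comparison[OF _ inv0]) (use that in auto)
    from tendsto_add[OF this limj[of j]] show ?thesis by simp
  qed
  show ?thesis
  proof (intro bexI[OF _ l] allI impI conjI)
    fix i assume i: "i<n"
    have "(\<lambda>k. A (\<sigma> k) i) \<longlonglongrightarrow> l"
      unfolding tendsto_fun_iff
    proof
      fix j show "(\<lambda>k. A (\<sigma> k) i j) \<longlonglongrightarrow> l j"
        by (rule conv[of "\<lambda>k. A (\<sigma> k) i"]) (use A[OF i] in blast)
    qed
    then show "l \<in> P i" by (rule closed_sequentially[OF clP[OF i], rotated]) (use A[OF i] in blast)
    have "(\<lambda>k. B (\<sigma> k) i) \<longlonglongrightarrow> l"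
      unfolding tendsto_fun_iff
    proof
      fix j show "(\<lambda>k. B (\<sigma> k) i j) \<longlonglongrightarrow> l j"
        by (rule conv[of "\<lambda>k. B (\<sigma> k) i"]) (use B[OF i] in blast)
    qed
    then show "l \<in> Q i" by (rule closed_sequentially[OF clQ[OF i], rotated]) (use B[OF i] in blast)
  qed
qed

lemma continuous_on_coord [continuous_intros]: "continuous_on S (\<lambda>x::nat \<Rightarrow> real. x i)"
  by (rule continuous_on_subset[OF continuous_on_product_coordinates]) simp

lemma brouwer_cube_nat:
  assumes cf: "continuous_on (cube n) f" and fc: "f ` cube n \<subseteq> cube n"
  shows "\<exists>x\<in>cube n. f x = x"
proof -
  have cfi: "continuous_on (cube n) (\<lambda>x. f x i)" for i
    by (rule continuous_on_product_then_coordinatewise[OF cf])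
  have "\<exists>x\<in>cube n. \<forall>i<n. x \<in> {x\<in>cube n. x i \<le> f x i} \<and> x \<in> {x\<in>cube n. f x i \<le> x i}"
  proof (rule PM)
    show "closed {x \<in> cube n. x i \<le> f x i}" for i
      by (rule continuous_on_closed_Collect_le[OF _ cfi closed_cube]) (intro continuous_intros)
    show "closed {x \<in> cube n. f x i \<le> x i}" for i
      by (rule continuous_on_closed_Collect_le[OF cfi _ closed_cube]) (intro continuous_intros)
    show "x \<in> {x \<in> cube n. x i \<le> f x i}" if "i<n" "x \<in> cube n" "x i = 0" for i x
    proof -
      have "f x \<in> cube n" using that fc by blast
      then show ?thesis using that by (simp add: cube_def)
    qed
    show "x \<in> {x \<in> cube n. f x i \<le> x i}" if "i<n" "x \<in> cube n" "x i = 1" for i x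
    proof -
      have "f x \<in> cube n" using that fc by blast
      then show ?thesis using that by (simp add: cube_def)
    qed
    show "x \<in> {x \<in> cube n. x i \<le> f x i} \<or> x \<in> {x \<in> cube n. f x i \<le> x i}" if "i<n" "x \<in> cube n" for i x
      using that by auto
  qed
  then obtain x where x: "x \<in> cube n" and xi: "\<forall>i<n. x \<in> {x\<in>cube n. x i \<le> f x i} \<and> x \<in> {x\<in>cube n. f x i \<le> x i}"
    by blast
  have "f x = x"
  proof
    fix i show "f x i = x i"
    proof (cases "i<n")
      case True then show ?thesis using xi by force
    next
      case False
      have "f x \<in> cube n" using x fc by blast
      then show ?thesis using False x by (simp add: cube_def)
    qed
  qed
  then show ?thesis using x by blast
qed



definition csimp :: "nat \<Rightarrow> (nat \<Rightarrow> real) set" where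
  "csimp n = {x\<in>cube n. (\<Sum>i<n. x i) \<le> 1}"

definition wt :: "nat \<Rightarrow> (nat \<Rightarrow> real) \<Rightarrow> nat \<Rightarrow> real" where
  "wt n x j = (if j = 0 then 1 - (\<Sum>i<n. x i) else x (j - 1))"

lemma closed_csimp: "closed (csimp n)"
  unfolding csimp_def
  by (rule continuous_on_closed_Collect_le[OF _ _ closed_cube]) (intro continuous_intros)+

lemma compact_csimp: "compact (csimp n)"
proof -
  have "csimp n = cube n \<inter> csimp n" by (auto simp: csimp_def)
  then show ?thesis using compact_Int_closed[OF compact_cube closed_csimp] by metis
qed

lemma KKM_corner:
  fixes B :: "nat \<Rightarrow> (nat \<Rightarrow> real) set"
  assumes clB: "\<And>j. j \<le> n \<Longrightarrow> closed (B j)"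
  and cov: "\<And>x. x \<in> csimp n \<Longrightarrow> \<exists>j\<le>n. 0 < wt n x j \<and> x \<in> B j"
  shows "\<exists>x\<in>csimp n. \<forall>j\<le>n. x \<in> B j"
proof (rule ccontr)
  assume "\<not> ?thesis"
  then have nc: "\<And>x. x\<in>csimp n \<Longrightarrow> \<exists>j\<le>n. x \<notin> B j" by blast
  define g where "g j x = infdist x (B j) + (if B j = {} then 1 else 0)" for j x
  have g0: "0 \<le> g j x" for j x by (simp add: g_def infdist_nonneg)
  have gz: "g j x = 0 \<longleftrightarrow> x \<in> B j" if "j \<le> n" for j x
  proof (cases "B j = {}")
    case True then show ?thesis by (simp add: g_def infdist_def)
  next
    case False then show ?thesis using in_closed_iff_infdist_zero[OF clB[OF that] False] by (simp add: g_def)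
  qed
  have gcont: "continuous_on S (g j)" for j S
    unfolding g_def by (intro continuous_intros continuous_on_infdist)
  define S where "S x = g 0 x + (\<Sum>i<n. g (Suc i) x)" for x
  have Spos: "0 < S x" if xs: "x \<in> csimp n" for x
  proof -
    obtain j where j: "j \<le> n" "x \<notin> B j" using nc[OF xs] by blast
    then have gp: "0 < g j x" using gz[OF j(1), of x] g0[of j x] by linarith
    have sn: "0 \<le> (\<Sum>i<n. g (Suc i) x)" by (simp add: g0 sum_nonneg)
    show ?thesis
    proof (cases j)
      case 0 then show ?thesis using gp sn by (simp add: S_def)
    next
      case (Suc i)
      then have "i < n" using j by simp
      then have "g (Suc i) x \<le> (\<Sum>i<n. g (Suc i) x)"
        by (intro member_le_sum) (auto simp: g0)
      then show ?thesis using gp g0[of 0 x] Suc by (simp add: S_def)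
    qed
  qed
  define f where "f x = (\<lambda>i. if i<n then g (Suc i) x / S x else 0)" for x
  define r where "r x = (\<lambda>i. x i / max 1 (\<Sum>k<n. x k))" for x :: "nat \<Rightarrow> real"
  have r_simp: "r x \<in> csimp n" if "x \<in> cube n" for x
  proof -
    have nn: "\<And>i. 0 \<le> x i" using that by (auto simp: cube_def) (metis linorder_not_le order_refl)
    have le: "x i \<le> (\<Sum>k<n. x k)" if "i < n" for i
      using that by (intro member_le_sum) (auto simp: nn)
    have "(\<Sum>i<n. r x i) = (\<Sum>k<n. x k) / max 1 (\<Sum>k<n. x k)"
      by (simp add: r_def sum_divide_distrib)
    also have "\<dots> \<le> 1" by simp
    finally have s1: "(\<Sum>i<n. r x i) \<le> 1" .
    have "r x \<in> cube n"
      unfolding cube_def r_def using that nn le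
      by (auto simp: cube_def divide_le_eq_1 intro: order_trans[OF _ max.cobounded2])
    then show ?thesis using s1 by (simp add: csimp_def)
  qed
  have r_id: "r x = x" if "x \<in> csimp n" for x
    using that by (auto simp: r_def csimp_def max_def)
  have f_simp: "f x \<in> csimp n" if "x \<in> csimp n" for x
  proof -
    have Sp: "0 < S x" by (rule Spos[OF that])
    have "(\<Sum>i<n. f x i) = (\<Sum>i<n. g (Suc i) x) / S x"
      by (simp add: f_def sum_divide_distrib)
    also have "\<dots> \<le> 1" using Sp g0[of 0 x] by (simp add: S_def divide_le_eq_1)
    finally have s1: "(\<Sum>i<n. f x i) \<le> 1" .
    have le: "g (Suc i) x \<le> S x" if "i < n" for i
    proof -
      have "g (Suc i) x \<le> (\<Sum>i<n. g (Suc i) x)"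
        using that by (intro member_le_sum) (auto simp: g0)
      then show ?thesis using g0[of 0 x] by (simp add: S_def)
    qed
    have "f x \<in> cube n"
      unfolding cube_def f_def using Sp le g0 by (auto simp: divide_le_eq_1)
    then show ?thesis using s1 by (simp add: csimp_def)
  qed
  have fcont: "continuous_on (csimp n) f"
    unfolding f_def
  proof (intro continuous_on_coordinatewise_then_product)
    fix i show "continuous_on (csimp n) (\<lambda>x. if i < n then g (Suc i) x / S x else 0)"
    proof (cases "i < n")
      case True
      have "continuous_on (csimp n) (\<lambda>x. g (Suc i) x / S x)"
        unfolding S_def using Spos unfolding S_def
        by (intro continuous_intros gcont) (metis less_irrefl)
      then show ?thesis using True by simp
    qed simp
  qed
  have rcont: "continuous_on (cube n) r"
    unfolding r_def
    by (intro continuous_on_coordinatewise_then_product continuous_intros) auto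
  have "continuous_on (cube n) (f \<circ> r)"
    by (rule continuous_on_compose[OF rcont continuous_on_subset[OF fcont]]) (use r_simp in blast)
  moreover have "(f \<circ> r) ` cube n \<subseteq> cube n"
    using r_simp f_simp by (auto simp: csimp_def)
  ultimately obtain x where x: "x \<in> cube n" and fx: "f (r x) = x"
    using brouwer_cube_nat by (metis comp_apply)
  have xs: "x \<in> csimp n" using fx f_simp r_simp x by metis
  have fxx: "f x = x" using fx r_id[OF xs] by simp
  obtain j where j: "j \<le> n" "0 < wt n x j" "x \<in> B j" using cov[OF xs] by blast
  have gj: "g j x = 0" using gz[OF j(1)] j(3) by simp
  have Sp: "0 < S x" by (rule Spos[OF xs])
  show False
  proof (cases j)
    case 0
    have "(\<Sum>i<n. x i) = (\<Sum>i<n. f x i)" using fxx by simp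
    also have "\<dots> = (\<Sum>i<n. g (Suc i) x) / S x"
      by (simp add: f_def sum_divide_distrib)
    also have "\<dots> = 1" using Sp gj 0 by (simp add: S_def)
    finally show False using j(2) 0 by (simp add: wt_def)
  next
    case (Suc i)
    then have i: "i < n" using j by simp
    have "x i = f x i" using fxx by simp
    also have "\<dots> = 0" using i gj Suc by (simp add: f_def)
    finally show False using j(2) Suc by (simp add: wt_def)
  qed
qed



lemma tvs_add_cont:
  fixes f g :: "'x::topological_space \<Rightarrow> 'a::{real_vector,topological_space}"
  assumes "tvs TYPE('a)" "continuous_on S f" "continuous_on S g"
  shows "continuous_on S (\<lambda>x. f x + g x)"
proof -
  have "continuous_on S (\<lambda>x. (f x, g x))" by (intro continuous_on_Pair assms)
  moreover have "continuous_on UNIV (\<lambda>p::'a\<times>'a. fst p + snd p)" using assms(1) by (simp add: tvs_def)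
  ultimately show ?thesis
    using continuous_on_compose2[of UNIV "\<lambda>p::'a\<times>'a. fst p + snd p" S "\<lambda>x. (f x, g x)"] by simp
qed

lemma tvs_scale_cont:
  fixes a :: "'x::topological_space \<Rightarrow> real" and c :: "'a::{real_vector,topological_space}"
  assumes "tvs TYPE('a)" "continuous_on S a"
  shows "continuous_on S (\<lambda>x. a x *\<^sub>R c)"
proof -
  have "continuous_on S (\<lambda>x. (a x, c))" by (intro continuous_on_Pair assms continuous_on_const)
  moreover have "continuous_on UNIV (\<lambda>p::real\<times>'a. fst p *\<^sub>R snd p)" using assms(1) by (simp add: tvs_def)
  ultimately show ?thesis
    using continuous_on_compose2[of UNIV "\<lambda>p::real\<times>'a. fst p *\<^sub>R snd p" S "\<lambda>x. (a x, c)"] by simp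
qed

lemma tvs_sum_cont:
  fixes h :: "'i \<Rightarrow> 'x::topological_space \<Rightarrow> 'a::{real_vector,topological_space}"
  assumes "tvs TYPE('a)" "finite I" "\<And>i. i \<in> I \<Longrightarrow> continuous_on S (h i)"
  shows "continuous_on S (\<lambda>x. \<Sum>i\<in>I. h i x)"
  using assms(2,3)
proof (induction I rule: finite_induct)
  case empty then show ?case by (simp add: continuous_on_const)
next
  case (insert i I)
  then show ?case by (simp add: tvs_add_cont[OF assms(1)])
qed

lemma fin_int:
  fixes D :: "'a::{real_vector,topological_space} set" and R1 :: "('a \<times> 'b) set"
  assumes tvs: "tvs TYPE('a)" and R2D: "R2 \<subseteq> D \<times> D" and kkm: "KKM_rel D R2"
   and cc: "\<forall>y\<in>F. compactly_closed {x \<in> D. (x, y) \<in> R1}"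
   and zD: "\<forall>y\<in>F. z y \<in> D" and zR: "\<forall>y\<in>F. \<forall>x\<in>D. (z y, x) \<in> R2 \<longrightarrow> (x, y) \<in> R1"
   and fin: "finite F" and ne: "F \<noteq> {}"
  shows "\<exists>x\<in>D. \<forall>y\<in>F. (x, y) \<in> R1"
proof -
  obtain e where e: "bij_betw e {0..<card F} F" using ex_bij_betw_nat_finite[OF fin] by blast
  define n where "n = card F - 1"
  have cardF: "card F = Suc n" using fin ne n_def by (simp add: card_gt_0_iff)
  have eimg: "e ` {..n} = F"
    using e cardF by (simp add: bij_betw_def atLeast0_lessThan_Suc lessThan_Suc_atMost atLeast0LessThan)
  define zz where "zz j = z (e j)" for j
  have zzD: "zz j \<in> D" if "j \<le> n" for j using zD eimg that by (auto simp: zz_def)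
  define \<phi> where "\<phi> x = (\<Sum>j\<le>n. wt n x j *\<^sub>R zz j)" for x
  have wtc: "continuous_on UNIV (\<lambda>x. wt n x j)" for j
    by (cases "j = 0") (simp_all add: wt_def, (intro continuous_intros)+)
  have \<phi>c: "continuous_on UNIV \<phi>"
    unfolding \<phi>_def by (intro tvs_sum_cont[OF tvs] tvs_scale_cont[OF tvs] wtc) simp
  define Bs where "Bs j = {x \<in> csimp n. \<phi> x \<in> {x\<in>D. (x, e j)\<in>R1}}" for j
  have clB: "closed (Bs j)" if j: "j \<le> n" for j
  proof -
    define G where "G = {x\<in>D. (x, e j)\<in>R1}"
    define C where "C = \<phi> ` csimp n"
    have "compact C" unfolding C_def
      by (rule compact_continuous_image[OF continuous_on_subset[OF \<phi>c] compact_csimp]) simp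
    moreover have "compactly_closed G" using cc eimg j G_def by blast
    ultimately have "closedin (top_of_set C) (G \<inter> C)" unfolding compactly_closed_def by blast
    moreover have cs: "continuous_on (csimp n) \<phi>" using continuous_on_subset[OF \<phi>c] by blast
    moreover have "\<phi> \<in> csimp n \<rightarrow> C" by (auto simp: C_def)
    ultimately have "closedin (top_of_set (csimp n)) (csimp n \<inter> \<phi> -` (G \<inter> C))"
      using continuous_closedin_preimage_gen by blast
    moreover have "csimp n \<inter> \<phi> -` (G \<inter> C) = Bs j" by (auto simp: Bs_def G_def C_def)
    ultimately show ?thesis using closedin_closed_trans closed_csimp by metis
  qed
  have wt_nn: "0 \<le> wt n x j" if "x \<in> csimp n" for x j
    using that by (auto simp: wt_def csimp_def cube_def) (metis linorder_not_le order_refl)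
  have wt_sum: "(\<Sum>j\<le>n. wt n x j) = 1" for x
    by (simp add: wt_def sum.atMost_shift)
  have cov: "\<exists>j\<le>n. 0 < wt n x j \<and> x \<in> Bs j" if xs: "x \<in> csimp n" for x
  proof -
    define T where "T = {j. j \<le> n \<and> 0 < wt n x j}"
    define N where "N = zz ` T"
    have fT: "finite T" by (simp add: T_def)
    have TT: "T \<subseteq> {..n}" by (auto simp: T_def)
    have z0: "\<forall>j\<in>{..n} - T. wt n x j = 0"
    proof
      fix j assume "j \<in> {..n} - T"
      then have "\<not> 0 < wt n x j" by (simp add: T_def)
      then show "wt n x j = 0" using wt_nn[OF xs, of j] by linarith
    qed
    have "\<phi> x = (\<Sum>j\<in>T. wt n x j *\<^sub>R zz j)"
      unfolding \<phi>_def by (rule sum.mono_neutral_right) (use TT z0 in auto)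
    moreover have "(\<Sum>j\<in>T. wt n x j) = 1"
      using wt_sum[of x] sum.mono_neutral_right[of "{..n}" T "\<lambda>j. wt n x j"] TT z0 by simp
    ultimately have "\<phi> x \<in> convex hull N"
      using convex_sum[OF fT convex_convex_hull, of "\<lambda>j. wt n x j" zz N] wt_nn[OF xs]
      by (simp add: N_def hull_inc)
    moreover have "finite N" "N \<subseteq> D" using fT zzD by (auto simp: N_def T_def)
    ultimately obtain z' where "z' \<in> N" "(z', \<phi> x) \<in> R2"
      using kkm unfolding KKM_rel_def by blast
    then obtain j where j: "j \<in> T" "(zz j, \<phi> x) \<in> R2" by (auto simp: N_def)
    have "\<phi> x \<in> D" using j R2D by blast
    moreover have "e j \<in> F" using eimg j by (auto simp: T_def)
    ultimately have "(\<phi> x, e j) \<in> R1" using zR j by (auto simp: zz_def)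
    then show ?thesis using j \<open>\<phi> x \<in> D\<close> xs by (auto simp: T_def Bs_def)
  qed
  obtain x where x: "x \<in> csimp n" "\<forall>j\<le>n. x \<in> Bs j"
    using KKM_corner[of n Bs, OF clB cov] by blast
  have "\<phi> x \<in> D" using x(2) by (auto simp: Bs_def)
  moreover have "\<forall>y\<in>F. (\<phi> x, y) \<in> R1" using x(2) eimg by (auto simp: Bs_def)
  ultimately show ?thesis by blast
qed


theorem corollary3p2:
  fixes D :: "'a::{real_vector,topological_space} set"
    and K :: "'b set"
    and R1 :: "('a \<times> 'b) set"
    and R2 :: "('a \<times> 'a) set"
    and M :: "'a set"
    and L :: "'b set"
  assumes "tvs TYPE('a)"
    and "D \<noteq> {}" and "convex D" and "K \<noteq> {}"
    and "R1 \<subseteq> D \<times> K" and "R2 \<subseteq> D \<times> D"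
    and "\<forall>y\<in>K. compactly_closed {x \<in> D. (x, y) \<in> R1}"
    and "KKM_rel D R2"
    and "\<forall>y\<in>K. \<exists>z\<in>D. \<forall>x\<in>D. (z, x) \<in> R2 \<longrightarrow> (x, y) \<in> R1"
    and "M \<noteq> {}" and "compact M" and "M \<subseteq> D"
    and "finite L" and "L \<subseteq> K"
    and "\<forall>x \<in> D - M. \<exists>y\<in>L. (x, y) \<notin> R1"
  shows "\<exists>xb\<in>M. \<forall>y\<in>K. (xb, y) \<in> R1"
proof -
  note tvs = assms(1) and R2D = assms(6) and cc = assms(7) and kkm = assms(8)
  obtain z where zD: "\<forall>y\<in>K. z y \<in> D" and zR: "\<forall>y\<in>K. \<forall>x\<in>D. (z y, x) \<in> R2 \<longrightarrow> (x, y) \<in> R1"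
    using assms(9) by metis
  obtain y0 where y0: "y0 \<in> K" using assms(4) by blast
  define U where "U = (\<lambda>y. {x\<in>D. (x, y) \<in> R1} \<inter> M) ` K"
  have cM: "compactin (top_of_set M) M"
    using assms(11) by (simp add: compactin_subtopology)
  have "M \<inter> \<Inter>U \<noteq> {}"
  proof (rule compactin_fip[THEN iffD1, OF cM, THEN conjunct2, rule_format], intro conjI allI impI)
    show "\<forall>C\<in>U. closedin (top_of_set M) C"
      using cc assms(11) unfolding U_def compactly_closed_def by blast
  next
    fix \<F> assume "finite \<F> \<and> \<F> \<subseteq> U"
    then obtain F0 where F0: "F0 \<subseteq> K" "finite F0" "\<F> = (\<lambda>y. {x\<in>D. (x, y) \<in> R1} \<inter> M) ` F0"
      unfolding U_def by (meson finite_subset_image)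
    define F where "F = F0 \<union> L \<union> {y0}"
    have FK: "F \<subseteq> K" using F0 assms(14) y0 by (auto simp: F_def)
    have h1: "\<forall>y\<in>F. compactly_closed {x \<in> D. (x, y) \<in> R1}" using cc FK by blast
    have h2: "\<forall>y\<in>F. z y \<in> D" using zD FK by blast
    have h3: "\<forall>y\<in>F. \<forall>x\<in>D. (z y, x) \<in> R2 \<longrightarrow> (x, y) \<in> R1" using zR FK by blast
    have h4: "finite F" using F0(2) assms(13) by (simp add: F_def)
    have h5: "F \<noteq> {}" by (simp add: F_def)
    obtain x where x: "x \<in> D" "\<forall>y\<in>F. (x, y) \<in> R1"
      using fin_int[OF tvs R2D kkm h1 h2 h3 h4 h5] by blast
    have "x \<in> M"
    proof (rule ccontr)
      assume "x \<notin> M"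
      then obtain y where "y \<in> L" "(x, y) \<notin> R1" using assms(15) x(1) by blast
      then show False using x(2) by (auto simp: F_def)
    qed
    then have "x \<in> M \<inter> \<Inter>\<F>" using x F0(3) by (auto simp: F_def)
    then show "M \<inter> \<Inter>\<F> \<noteq> {}" by blast
  qed
  then obtain x where "x \<in> M" "x \<in> \<Inter>U" by blast
  then show ?thesis unfolding U_def by blast
qed

end
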